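(* Let $c>0$, $\alpha>0$ and $g\in C^2(\mathbb{R})$. Let $w(x,t)=\frac{1}{2c}\int_{x-ct}^{x+ct}g(y)\,dy$ be the solution of the wave equation $\frac{\partial^2 w}{\partial t^2}= c^2 \frac{\partial^2 w}{\partial x^2}$ with $w(x,0)=0$, $\frac{\partial w}{\partial t}(x,0)=g(x)$. Define $$v(x,t)=\frac{2}{B(\alpha,\frac12)}\int_0^1(1-u^2)^{\alpha-1}\,w(x,ut)\,du .$$ Then $v$ solves $$\frac{\partial^2 v}{\partial t^2}+\frac{2\alpha}{t}\frac{\partial v}{\partial t}= c^2 \frac{\partial^2 v}{\partial x^2}+\frac{2g(x)}{t\,B(\alpha,\frac12)},\quad t>0,$$ with $v(x,0)=0$ and $\frac{\partial v}{\partial t}(x,0)=\frac{\Gamma(\alpha+\frac12)}{\sqrt{\pi}\,\Gamma(\alpha+1)}\,g(x)$.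
   Context: $B(a,b)=\Gamma(a)\Gamma(b)/\Gamma(a+b)$ denotes the Beta function. *)

theory Defs
  imports "HOL-Analysis.Analysis"
begin

definition C2 :: "(real \<Rightarrow> real) \<Rightarrow> bool" where
  "C2 g \<longleftrightarrow> (\<exists>g' g''. (\<forall>x. (g has_real_derivative g' x) (at x)) \<and>
                        (\<forall>x. (g' has_real_derivative g'' x) (at x)) \<and>
                        continuous_on UNIV g'')"

end

theory Submission
  imports Defs
begin


lemma absint_cont_mult:
  fixes \<rho> h :: "real \<Rightarrow> real"
  assumes "\<rho> absolutely_integrable_on {a..b}" "continuous_on {a..b} h"
  shows "(\<lambda>u. \<rho> u * h u) absolutely_integrable_on {a..b}"
proof -
  have "(\<lambda>u. h u * \<rho> u) absolutely_integrable_on {a..b}"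
    apply (rule absolutely_integrable_bounded_measurable_product_real)
    using assms by (auto intro!: continuous_imp_measurable_on_sets_lebesgue compact_imp_bounded compact_continuous_image)
  then show ?thesis by (simp add: mult.commute)
qed

lemma absint_cont_int:
  fixes \<rho> h :: "real \<Rightarrow> real"
  assumes "\<rho> absolutely_integrable_on {a..b}" "continuous_on {a..b} h"
  shows "(\<lambda>u. \<rho> u * h u) integrable_on {a..b}"
  using absint_cont_mult[OF assms] absolutely_integrable_on_def by blast

lemma deriv_param:
  fixes \<rho> F f a b :: "real \<Rightarrow> real"
  assumes \<rho>: "\<rho> absolutely_integrable_on {0..1}"
    and a: "continuous_on {0..1} a" and b: "continuous_on {0..1} b"
    and F: "\<And>y. (F has_real_derivative f y) (at y)" and f: "continuous_on UNIV f"
  shows "((\<lambda>s. integral {0..1} (\<lambda>u. \<rho> u * F (a u * s + b u))) has_real_derivative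
          integral {0..1} (\<lambda>u. \<rho> u * (a u * f (a u * s + b u)))) (at s)"
proof -
  have Fc: "continuous_on UNIV F"
    using F by (meson DERIV_isCont continuous_at_imp_continuous_on)
  have intF: "(\<lambda>u. \<rho> u * F (a u * y + b u)) integrable_on {0..1}" for y
    by (rule absint_cont_int[OF \<rho>]) (auto intro!: continuous_intros a b continuous_on_compose2[OF Fc])
  have intf: "(\<lambda>u. \<rho> u * (a u * f (a u * s + b u))) integrable_on {0..1}"
    by (rule absint_cont_int[OF \<rho>]) (auto intro!: continuous_intros a b continuous_on_compose2[OF f])
  have intabs: "(\<lambda>u. \<bar>\<rho> u\<bar>) integrable_on {0..1}"
    using \<rho> absolutely_integrable_on_def[of _ \<rho>] by simp
  obtain M where M: "M > 0" "\<And>u. u \<in> {0..1} \<Longrightarrow> \<bar>a u\<bar> \<le> M"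
    using compact_imp_bounded[OF compact_continuous_image[OF a compact_Icc]]
    unfolding bounded_pos by auto
  have cz: "continuous_on {0..1} (\<lambda>u. a u * s + b u)"
    by (auto intro!: continuous_intros a b)
  obtain N where N: "N > 0" "\<And>u. u \<in> {0..1} \<Longrightarrow> \<bar>a u * s + b u\<bar> \<le> N"
    using compact_imp_bounded[OF compact_continuous_image[OF cz compact_Icc]]
    unfolding bounded_pos by auto
  define P where "P = integral {0..1} (\<lambda>u. \<bar>\<rho> u\<bar>) + 1"
  have P: "P > 0" using integral_nonneg[OF intabs] unfolding P_def by force
  show ?thesis
    unfolding has_field_derivative_iff
  proof (rule tendstoI)
    fix e :: real assume e: "e > 0"
    define e' where "e' = e / (2 * M * P)"
    have e': "e' > 0" using e M P unfolding e'_def by auto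
    have uc: "uniformly_continuous_on (cball 0 (N+1)) f"
      by (rule compact_uniformly_continuous) (auto intro: continuous_on_subset[OF f])
    obtain d where d: "d > 0" "\<And>x x'. x \<in> cball 0 (N+1) \<Longrightarrow> x' \<in> cball 0 (N+1) \<Longrightarrow> dist x' x < d \<Longrightarrow> dist (f x') (f x) < e'"
      using uc e' unfolding uniformly_continuous_on_def by metis
    define d1 where "d1 = min d 1"
    have d1: "d1 > 0" "d1 \<le> d" "d1 \<le> 1" using d unfolding d1_def by auto
    show "\<forall>\<^sub>F y in at s. dist ((integral {0..1} (\<lambda>u. \<rho> u * F (a u * y + b u)) -
                 integral {0..1} (\<lambda>u. \<rho> u * F (a u * s + b u))) / (y - s))
           (integral {0..1} (\<lambda>u. \<rho> u * (a u * f (a u * s + b u)))) < e"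
      unfolding eventually_at
    proof (intro exI[of _ "d1 / M"] conjI ballI impI)
      show "d1 / M > 0" using d1 M by auto
      fix y assume "y \<in> UNIV" and y: "y \<noteq> s \<and> dist y s < d1 / M"
      define h where "h = y - s"
      have h: "h \<noteq> 0" "\<bar>h\<bar> < d1 / M" using y unfolding h_def dist_real_def by auto
      define Q where "Q u = (F (a u * y + b u) - F (a u * s + b u)) / h - a u * f (a u * s + b u)" for u
      have Qb: "\<bar>Q u\<bar> \<le> e' * M" if u: "u \<in> {0..1}" for u
      proof -
        define z where "z = a u * s + b u"
        define k where "k = a u * h"
        have yz: "a u * y + b u = z + k" unfolding z_def k_def h_def by (simp add: algebra_simps)
        have kb: "\<bar>k\<bar> \<le> M * \<bar>h\<bar>" unfolding k_def using M(2)[OF u] by (simp add: abs_mult mult_right_mono)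
        have "M * \<bar>h\<bar> < d1" using h M by (simp add: field_simps)
        hence kd: "\<bar>k\<bar> < d1" using kb by linarith
        have zN: "\<bar>z\<bar> \<le> N" using N(2)[OF u] unfolding z_def .
        have "norm ((\<lambda>r. F r - r * f z) (z + k) - (\<lambda>r. F r - r * f z) z) \<le> e' * norm ((z + k) - z)"
        proof (rule field_differentiable_bound[of "ball z d1"])
          show "convex (ball z d1)" by simp
          fix r assume r: "r \<in> ball z d1"
          show "((\<lambda>r. F r - r * f z) has_field_derivative (f r - f z)) (at r within ball z d1)"
            by (auto intro!: derivative_eq_intros has_field_derivative_at_within[OF F])
          have "r \<in> cball 0 (N+1)" "z \<in> cball 0 (N+1)" using r zN d1 by (auto simp: dist_real_def)
          moreover have "dist r z < d" using r d1 by (auto simp: dist_commute)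
          ultimately show "norm (f r - f z) \<le> e'" using d(2)[of z r] by (auto simp: dist_real_def)
        next
          show "z + k \<in> ball z d1" using kd by (auto simp: dist_real_def)
          show "z \<in> ball z d1" using d1 by auto
        qed
        hence "\<bar>F (z + k) - F z - k * f z\<bar> \<le> e' * \<bar>k\<bar>" by (simp add: algebra_simps)
        also have "\<dots> \<le> e' * (M * \<bar>h\<bar>)" using kb e' by (simp add: mult_left_mono)
        finally have "\<bar>F (z + k) - F z - k * f z\<bar> / \<bar>h\<bar> \<le> e' * M"
          using h by (simp add: field_simps)
        moreover have "Q u = (F (z + k) - F z - k * f z) / h"
          unfolding Q_def yz using h by (simp add: z_def k_def field_simps)
        ultimately show ?thesis by (simp add: abs_divide)
      qed
      have eqQ: "(integral {0..1} (\<lambda>u. \<rho> u * F (a u * y + b u)) -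
                 integral {0..1} (\<lambda>u. \<rho> u * F (a u * s + b u))) / (y - s) -
                 integral {0..1} (\<lambda>u. \<rho> u * (a u * f (a u * s + b u)))
               = integral {0..1} (\<lambda>u. \<rho> u * Q u)"
      proof -
        have "((\<lambda>u. (\<rho> u * F (a u * y + b u) - \<rho> u * F (a u * s + b u)) * (1/h) - \<rho> u * (a u * f (a u * s + b u))) has_integral
               ((integral {0..1} (\<lambda>u. \<rho> u * F (a u * y + b u)) -
                 integral {0..1} (\<lambda>u. \<rho> u * F (a u * s + b u))) * (1/h) -
                 integral {0..1} (\<lambda>u. \<rho> u * (a u * f (a u * s + b u))))) {0..1}"
          by (intro has_integral_diff has_integral_mult_left integrable_integral intF intf)
        moreover have "(\<rho> u * F (a u * y + b u) - \<rho> u * F (a u * s + b u)) * (1/h) - \<rho> u * (a u * f (a u * s + b u)) = \<rho> u * Q u" for u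
          unfolding Q_def using h by (simp add: field_simps)
        ultimately show ?thesis using h unfolding h_def by (simp add: integral_unique divide_inverse)
      qed
      have ptw: "(\<rho> u * F (a u * y + b u) - \<rho> u * F (a u * s + b u)) * (1/h) - \<rho> u * (a u * f (a u * s + b u)) = \<rho> u * Q u" for u
        unfolding Q_def using h by (simp add: field_simps)
      have intQ: "(\<lambda>u. \<rho> u * Q u) integrable_on {0..1}"
        by (rule integrable_eq[OF _ ptw]) (intro integrable_diff integrable_on_mult_left intF intf)
      have "norm (integral {0..1} (\<lambda>u. \<rho> u * Q u)) \<le> integral {0..1} (\<lambda>u. \<bar>\<rho> u\<bar> * (e' * M))"
      proof (rule integral_norm_bound_integral[OF intQ])
        show "(\<lambda>u. \<bar>\<rho> u\<bar> * (e' * M)) integrable_on {0..1}" by (intro integrable_on_mult_left intabs)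
        fix u :: real assume "u \<in> {0..1}"
        then show "norm (\<rho> u * Q u) \<le> \<bar>\<rho> u\<bar> * (e' * M)"
          using Qb by (simp add: abs_mult mult_left_mono)
      qed
      also have "\<dots> = integral {0..1} (\<lambda>u. \<bar>\<rho> u\<bar>) * (e' * M)" by simp
      also have "\<dots> < P * (e' * M)" unfolding P_def using e' M by simp
      also have "\<dots> = e / 2" unfolding e'_def using M P by (simp add: field_simps)
      finally show "dist ((integral {0..1} (\<lambda>u. \<rho> u * F (a u * y + b u)) -
                 integral {0..1} (\<lambda>u. \<rho> u * F (a u * s + b u))) / (y - s))
           (integral {0..1} (\<lambda>u. \<rho> u * (a u * f (a u * s + b u)))) < e"
        using eqQ e by (simp add: dist_real_def)
    qed
  qed
qed



lemma deriv_param':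
  fixes \<rho> F f a b :: "real \<Rightarrow> real"
  assumes \<rho>: "\<rho> absolutely_integrable_on {0..1}"
    and a: "continuous_on {0..1} a" and b: "continuous_on {0..1} b"
    and F: "\<And>y. (F has_real_derivative f y) (at y)" and f: "continuous_on UNIV f"
  shows "((\<lambda>s. integral {0..1} (\<lambda>u. \<rho> u * F (a u * s + b u))) has_real_derivative
          integral {0..1} (\<lambda>u. (\<rho> u * a u) * f (a u * s + b u))) (at s)"
  using deriv_param[OF assms, of s] by (simp add: mult.assoc)

lemma rho_int:
  fixes \<alpha> :: real assumes "\<alpha> > 0"
  shows "((\<lambda>u. u * (1 - u\<^sup>2) powr (\<alpha> - 1)) has_integral 1 / (2 * \<alpha>)) {0..1}"
proof -
  define Fn where "Fn u = - ((1 - u\<^sup>2) powr \<alpha>) / (2 * \<alpha>)" for u :: real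
  have "((\<lambda>u. u * (1 - u\<^sup>2) powr (\<alpha> - 1)) has_integral (Fn 1 - Fn 0)) {0..1}"
  proof (rule fundamental_theorem_of_calculus_interior)
    show "continuous_on {0..1} Fn" unfolding Fn_def
      using assms by (intro continuous_intros continuous_on_powr') (auto simp: abs_square_le_1)
    fix u :: real assume u: "u \<in> {0<..<1}"
    have pos: "1 - u\<^sup>2 > 0" using u by (simp add: abs_square_less_1)
    have "((\<lambda>u. (1 - u\<^sup>2) powr \<alpha>) has_real_derivative \<alpha> * (1 - u\<^sup>2) powr (\<alpha> - 1) * (- (2 * u))) (at u)"
      by (rule DERIV_chain2[where g="\<lambda>u. 1 - u\<^sup>2" and x=u, OF has_real_derivative_powr[OF pos]]) (auto intro!: derivative_eq_intros)
    from DERIV_cdivide[OF DERIV_minus[OF this], of "2 * \<alpha>"]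
    have "(Fn has_real_derivative u * (1 - u\<^sup>2) powr (\<alpha> - 1)) (at u)"
      unfolding Fn_def[abs_def] using assms by (simp add: mult.commute)
    then show "(Fn has_vector_derivative u * (1 - u\<^sup>2) powr (\<alpha> - 1)) (at u)"
      by (simp add: has_real_derivative_iff_has_vector_derivative)
  qed simp
  moreover have "Fn 1 - Fn 0 = 1 / (2 * \<alpha>)" unfolding Fn_def using assms by simp
  ultimately show ?thesis by simp
qed

lemma rho_absint:
  fixes \<alpha> :: real assumes "\<alpha> > 0"
  shows "(\<lambda>u. (1 - u\<^sup>2) powr (\<alpha> - 1)) absolutely_integrable_on {0..1}"
proof -
  have a1: "(\<lambda>u. u * (1 - u\<^sup>2) powr (\<alpha> - 1)) absolutely_integrable_on {0..1}"
    using rho_int[OF assms] by (intro nonnegative_absolutely_integrable_1) auto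
  have a2: "(\<lambda>u. (u * (1 - u\<^sup>2) powr (\<alpha> - 1)) * u) absolutely_integrable_on {0..1}"
    by (rule absint_cont_mult[OF a1]) (intro continuous_intros)
  have a3: "(\<lambda>u. (1 - u\<^sup>2) powr \<alpha>) absolutely_integrable_on {0..1}"
    using assms by (intro absolutely_integrable_continuous_real continuous_intros continuous_on_powr') (auto simp: abs_square_le_1)
  have a4: "(\<lambda>u. (1 - u\<^sup>2) powr \<alpha> + (u * (1 - u\<^sup>2) powr (\<alpha> - 1)) * u) absolutely_integrable_on {0..1}"
    using set_integral_add(1)[OF a3 a2] .
  have eq: "(1 - u\<^sup>2) powr \<alpha> + (u * (1 - u\<^sup>2) powr (\<alpha> - 1)) * u = (1 - u\<^sup>2) powr (\<alpha> - 1)"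
    if "u \<in> {0..1}" for u
  proof (cases "u = 1")
    case True then show ?thesis by simp
  next
    case False
    with that have pos: "1 - u\<^sup>2 > 0" by (simp add: abs_square_less_1)
    have "(1 - u\<^sup>2) powr \<alpha> = (1 - u\<^sup>2) powr (\<alpha> - 1) * (1 - u\<^sup>2)"
      using pos by (simp add: powr_diff)
    then show ?thesis by (simp add: algebra_simps power2_eq_square)
  qed
  show ?thesis
    by (rule absolutely_integrable_spike[OF a4, where S="{}"]) (auto simp: eq)
qed




theorem theorem2p2:
  fixes c \<alpha> :: real and g :: "real \<Rightarrow> real" and w v :: "real \<Rightarrow> real \<Rightarrow> real"
  assumes c_pos: "c > 0" and alpha_pos: "\<alpha> > 0" and g_C2: "C2 g"
    and w_def: "\<And>x t. w x t = 1 / (2 * c) * integral {x - c * t .. x + c * t} g"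
    and v_def: "\<And>x t. v x t = 2 / Beta \<alpha> (1/2) *
                   integral {0..1} (\<lambda>u. (1 - u\<^sup>2) powr (\<alpha> - 1) * w x (u * t))"
  shows "(\<forall>x t. t > 0 \<longrightarrow>
            (\<lambda>s. v x s) differentiable at t \<and>
            (\<lambda>s. deriv (\<lambda>r. v x r) s) differentiable at t \<and>
            (\<lambda>y. v y t) differentiable at x \<and>
            (\<lambda>y. deriv (\<lambda>z. v z t) y) differentiable at x \<and>
            deriv (\<lambda>s. deriv (\<lambda>r. v x r) s) t + 2 * \<alpha> / t * deriv (\<lambda>s. v x s) t
              = c\<^sup>2 * deriv (\<lambda>y. deriv (\<lambda>z. v z t) y) x + 2 * g x / (t * Beta \<alpha> (1/2)))
       \<and> (\<forall>x. v x 0 = 0)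
       \<and> (\<forall>x. ((\<lambda>t. v x t) has_real_derivative
                 Gamma (\<alpha> + 1/2) / (sqrt pi * Gamma (\<alpha> + 1)) * g x) (at 0 within {0..}))"
proof -
  obtain g1 g2 where g1: "\<And>y. (g has_real_derivative g1 y) (at y)"
    and g2: "\<And>y. (g1 has_real_derivative g2 y) (at y)" and g2c: "continuous_on UNIV g2"
    using g_C2 unfolding C2_def by blast
  have gc: "continuous_on UNIV g" using g1 by (meson DERIV_isCont continuous_at_imp_continuous_on)
  have g1c: "continuous_on UNIV g1" using g2 by (meson DERIV_isCont continuous_at_imp_continuous_on)
  obtain G where G: "\<And>y. (G has_real_derivative g y) (at y)"
  proof -
    have "\<exists>F. \<forall>x::real. -\<infinity> < ereal x \<longrightarrow> ereal x < \<infinity> \<longrightarrow> (F has_vector_derivative g x) (at x)"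
      by (rule einterval_antiderivative) (use gc in \<open>auto simp: continuous_on_eq_continuous_at\<close>)
    then show ?thesis using that by (auto simp: has_real_derivative_iff_has_vector_derivative)
  qed
  have Gc: "continuous_on UNIV G" using G by (meson DERIV_isCont continuous_at_imp_continuous_on)
  have Gint: "integral {a..b} g = G b - G a" if "a \<le> b" for a b
  proof -
    have "(g has_integral (G b - G a)) {a..b}"
      using that by (intro fundamental_theorem_of_calculus)
        (auto simp: has_real_derivative_iff_has_vector_derivative[symmetric] intro: has_field_derivative_at_within[OF G])
    then show ?thesis by (rule integral_unique)
  qed
  define \<rho> where "\<rho> u = (1 - u\<^sup>2) powr (\<alpha> - 1)" for u :: real
  have \<rho>I: "\<rho> absolutely_integrable_on {0..1}"
    unfolding \<rho>_def using rho_absint[OF alpha_pos] .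
  have Bpos: "Beta \<alpha> (1/2) > 0" using alpha_pos unfolding Beta_def by simp
  define K where "K = 2 / Beta \<alpha> (1/2)"
  define Ig where "Ig r F a b s = integral {0..1} (\<lambda>u. r u * F (a u * s + b u))"
    for r F a b :: "real \<Rightarrow> real" and s :: real
  have DA: "(Ig r F a b has_real_derivative Ig (\<lambda>u. r u * a u) f a b s) (at s)"
    if "r absolutely_integrable_on {0..1}" "continuous_on {0..1} a" "continuous_on {0..1} b"
       "\<And>y. (F has_real_derivative f y) (at y)" "continuous_on UNIV f" for r F f a b s
    unfolding Ig_def[abs_def] using deriv_param'[OF that] by simp
  have AI: "(\<lambda>u. r u * a u) absolutely_integrable_on {0..1}"
    if "r absolutely_integrable_on {0..1}" "continuous_on {0..1} a" for r a :: "real \<Rightarrow> real"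
    using absint_cont_mult[OF that] .
  have veq: "v y s = K / (2 * c) * (integral {0..1} (\<lambda>u. \<rho> u * G (y + c * (u * s))) -
                                   integral {0..1} (\<lambda>u. \<rho> u * G (y - c * (u * s))))"
    if s: "s \<ge> 0" for y s
  proof -
    have i1: "(\<lambda>u. \<rho> u * G (y + c * (u * s))) integrable_on {0..1}"
      by (rule absint_cont_int[OF \<rho>I]) (auto intro!: continuous_intros continuous_on_compose2[OF Gc])
    have i2: "(\<lambda>u. \<rho> u * G (y - c * (u * s))) integrable_on {0..1}"
      by (rule absint_cont_int[OF \<rho>I]) (auto intro!: continuous_intros continuous_on_compose2[OF Gc])
    have "((\<lambda>u. (\<rho> u * G (y + c * (u * s)) - \<rho> u * G (y - c * (u * s))) / (2 * c)) has_integral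
          (integral {0..1} (\<lambda>u. \<rho> u * G (y + c * (u * s))) -
           integral {0..1} (\<lambda>u. \<rho> u * G (y - c * (u * s)))) / (2 * c)) {0..1}"
      by (intro has_integral_divide has_integral_diff integrable_integral i1 i2)
    moreover have "(\<rho> u * G (y + c * (u * s)) - \<rho> u * G (y - c * (u * s))) / (2 * c) =
                   (1 - u\<^sup>2) powr (\<alpha> - 1) * w y (u * s)" if "u \<in> {0..1}" for u
    proof -
      have "u * s \<ge> 0" using that s by auto
      hence "y - c * (u * s) \<le> y + c * (u * s)" using c_pos by (simp add: mult_nonneg_nonneg)
      then show ?thesis unfolding w_def Gint[OF \<open>y - c * (u * s) \<le> y + c * (u * s)\<close>] \<rho>_def
        using c_pos by (simp add: field_simps)
    qed
    ultimately have "integral {0..1} (\<lambda>u. (1 - u\<^sup>2) powr (\<alpha> - 1) * w y (u * s)) =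
          (integral {0..1} (\<lambda>u. \<rho> u * G (y + c * (u * s))) -
           integral {0..1} (\<lambda>u. \<rho> u * G (y - c * (u * s)))) / (2 * c)"
      by (metis (no_types, lifting) has_integral_eq integral_unique)
    then show ?thesis unfolding v_def K_def using c_pos Bpos by (simp add: field_simps)
  qed
  have vT: "v x s = K / (2 * c) * (Ig \<rho> G (\<lambda>u. c * u) (\<lambda>u. x) s - Ig \<rho> G (\<lambda>u. - (c * u)) (\<lambda>u. x) s)"
    if "s \<ge> 0" for x s
    unfolding veq[OF that] Ig_def by (simp add: algebra_simps)
  have vX: "v y t = K / (2 * c) * (Ig \<rho> G (\<lambda>u. 1) (\<lambda>u. c * u * t) y - Ig \<rho> G (\<lambda>u. 1) (\<lambda>u. - (c * u * t)) y)"
    if "t \<ge> 0" for y t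
    unfolding veq[OF that] Ig_def by (simp add: algebra_simps)
  have ca1: "continuous_on {0..1} (\<lambda>u::real. c * u)" "continuous_on {0..1} (\<lambda>u::real. - (c * u))"
    "continuous_on {0..1} (\<lambda>u::real. 1::real)"
    by (auto intro!: continuous_intros)
  have cb: "continuous_on {0..1} (\<lambda>u::real. x)" "continuous_on {0..1} (\<lambda>u::real. c * u * t)"
     "continuous_on {0..1} (\<lambda>u::real. - (c * u * t))" for x t :: real
    by (auto intro!: continuous_intros)
  define a1 where "a1 = (\<lambda>u::real. c * u)"
  define a2 where "a2 = (\<lambda>u::real. - (c * u))"
  define one where "one = (\<lambda>u::real. 1::real)"
  define \<rho>1 where "\<rho>1 = (\<lambda>u. \<rho> u * a1 u)"
  define \<rho>2 where "\<rho>2 = (\<lambda>u. \<rho> u * a2 u)"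
  define \<rho>11 where "\<rho>11 = (\<lambda>u. \<rho>1 u * a1 u)"
  define \<rho>22 where "\<rho>22 = (\<lambda>u. \<rho>2 u * a2 u)"
  define \<rho>o where "\<rho>o = (\<lambda>u. \<rho> u * one u)"
  define \<rho>oo where "\<rho>oo = (\<lambda>u. \<rho>o u * one u)"
  have ca: "continuous_on {0..1} a1" "continuous_on {0..1} a2" "continuous_on {0..1} one"
    unfolding a1_def a2_def one_def by (auto intro!: continuous_intros)
  have \<rho>1I: "\<rho>1 absolutely_integrable_on {0..1}" unfolding \<rho>1_def by (rule AI[OF \<rho>I ca(1)])
  have \<rho>2I: "\<rho>2 absolutely_integrable_on {0..1}" unfolding \<rho>2_def by (rule AI[OF \<rho>I ca(2)])
  have \<rho>oI: "\<rho>o absolutely_integrable_on {0..1}" unfolding \<rho>o_def by (rule AI[OF \<rho>I ca(3)])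
  have \<rho>11I: "\<rho>11 absolutely_integrable_on {0..1}" unfolding \<rho>11_def by (rule AI[OF \<rho>1I ca(1)])
  have \<rho>22I: "\<rho>22 absolutely_integrable_on {0..1}" unfolding \<rho>22_def by (rule AI[OF \<rho>2I ca(2)])
  have \<rho>ooI: "\<rho>oo absolutely_integrable_on {0..1}" unfolding \<rho>oo_def by (rule AI[OF \<rho>oI ca(3)])
  note D1 = DA[OF \<rho>I ca(1) cb(1) G gc, folded \<rho>1_def]
  note D2 = DA[OF \<rho>I ca(2) cb(1) G gc, folded \<rho>2_def]
  note D11 = DA[OF \<rho>1I ca(1) cb(1) g1 g1c, folded \<rho>11_def]
  note D22 = DA[OF \<rho>2I ca(2) cb(1) g1 g1c, folded \<rho>22_def]
  note Dp = DA[OF \<rho>I ca(3) cb(2) G gc, folded \<rho>o_def]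
  note Dm = DA[OF \<rho>I ca(3) cb(3) G gc, folded \<rho>o_def]
  note Dpp = DA[OF \<rho>oI ca(3) cb(2) g1 g1c, folded \<rho>oo_def]
  note Dmm = DA[OF \<rho>oI ca(3) cb(3) g1 g1c, folded \<rho>oo_def]
  define V1 where "V1 x s = K / (2 * c) * (Ig \<rho>1 g a1 (\<lambda>u. x) s - Ig \<rho>2 g a2 (\<lambda>u. x) s)" for x s
  define V2 where "V2 x s = K / (2 * c) * (Ig \<rho>11 g1 a1 (\<lambda>u. x) s - Ig \<rho>22 g1 a2 (\<lambda>u. x) s)" for x s
  define X1 where "X1 t y = K / (2 * c) * (Ig \<rho>o g one (\<lambda>u. c * u * t) y - Ig \<rho>o g one (\<lambda>u. - (c * u * t)) y)" for t y
  define X2 where "X2 t y = K / (2 * c) * (Ig \<rho>oo g1 one (\<lambda>u. c * u * t) y - Ig \<rho>oo g1 one (\<lambda>u. - (c * u * t)) y)" for t y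
  have hV1: "((\<lambda>s. K / (2 * c) * (Ig \<rho> G a1 (\<lambda>u. x) s - Ig \<rho> G a2 (\<lambda>u. x) s)) has_real_derivative V1 x s) (at s)" for x s
    unfolding V1_def by (intro DERIV_cmult DERIV_diff D1 D2)
  have hV2: "(V1 x has_real_derivative V2 x s) (at s)" for x s
    unfolding V1_def[abs_def] V2_def by (intro DERIV_cmult DERIV_diff D11 D22)
  have hX1: "((\<lambda>y. K / (2 * c) * (Ig \<rho> G one (\<lambda>u. c * u * t) y - Ig \<rho> G one (\<lambda>u. - (c * u * t)) y)) has_real_derivative X1 t y) (at y)" for t y
    unfolding X1_def by (intro DERIV_cmult DERIV_diff Dp Dm)
  have hX2: "(X1 t has_real_derivative X2 t y) (at y)" for t y
    unfolding X1_def[abs_def] X2_def by (intro DERIV_cmult DERIV_diff Dpp Dmm)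
  have vT': "v x s = K / (2 * c) * (Ig \<rho> G a1 (\<lambda>u. x) s - Ig \<rho> G a2 (\<lambda>u. x) s)" if "s \<ge> 0" for x s
    unfolding a1_def a2_def using vT[OF that] .
  have vX': "v y t = K / (2 * c) * (Ig \<rho> G one (\<lambda>u. c * u * t) y - Ig \<rho> G one (\<lambda>u. - (c * u * t)) y)" if "t \<ge> 0" for y t
    unfolding one_def using vX[OF that] .
  have vt1: "((\<lambda>s. v x s) has_real_derivative V1 x s) (at s)" if "s > 0" for x s
    by (rule has_field_derivative_transform_within_open[OF hV1, of "{0<..}"]) (use that vT' in auto)
  have dv1: "deriv (\<lambda>r. v x r) s = V1 x s" if "s > 0" for x s
    using DERIV_imp_deriv[OF vt1[OF that]] .
  have vt2: "((\<lambda>s. deriv (\<lambda>r. v x r) s) has_real_derivative V2 x s) (at s)" if "s > 0" for x s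
    by (rule has_field_derivative_transform_within_open[OF hV2, of "{0<..}"]) (use that dv1 in auto)
  have vy1: "((\<lambda>y. v y t) has_real_derivative X1 t y) (at y)" if "t > 0" for y t
    by (rule has_field_derivative_transform_within_open[OF hX1, of UNIV]) (use that vX' in auto)
  have dy1: "deriv (\<lambda>z. v z t) y = X1 t y" if "t > 0" for y t
    using DERIV_imp_deriv[OF vy1[OF that]] .
  have vy2: "((\<lambda>y. deriv (\<lambda>z. v z t) y) has_real_derivative X2 t y) (at y)" if "t > 0" for y t
    by (rule has_field_derivative_transform_within_open[OF hX2, of UNIV]) (use that dy1 in auto)
  have key: "V2 x t + 2 * \<alpha> / t * V1 x t = c\<^sup>2 * X2 t x + 2 * g x / (t * Beta \<alpha> (1/2))"
    if t: "t > 0" for x t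
  proof -
    have cg: "continuous_on {0..1} (\<lambda>u. h (a u * s + b u))"
      if "continuous_on UNIV h" "continuous_on {0..1} a" "continuous_on {0..1} b" for h a b :: "real \<Rightarrow> real" and s
      by (auto intro!: continuous_intros continuous_on_compose2[OF that(1)] that(2,3))
    have hI: "((\<lambda>u. r u * h (a u * s + b u)) has_integral Ig r h a b s) {0..1}"
      if "r absolutely_integrable_on {0..1}" "continuous_on UNIV h" "continuous_on {0..1} a" "continuous_on {0..1} b"
      for r h a b :: "real \<Rightarrow> real" and s
      unfolding Ig_def by (intro integrable_integral absint_cont_int[OF that(1)] cg that(2-4))
    define comb where "comb u = (\<rho>11 u * g1 (a1 u * t + x) - \<rho>22 u * g1 (a2 u * t + x)) +
        2 * \<alpha> / t * (\<rho>1 u * g (a1 u * t + x) - \<rho>2 u * g (a2 u * t + x)) -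
        c\<^sup>2 * (\<rho>oo u * g1 (one u * x + c * u * t) - \<rho>oo u * g1 (one u * x + - (c * u * t)))" for u
    have I1: "(comb has_integral (Ig \<rho>11 g1 a1 (\<lambda>u. x) t - Ig \<rho>22 g1 a2 (\<lambda>u. x) t) +
        2 * \<alpha> / t * (Ig \<rho>1 g a1 (\<lambda>u. x) t - Ig \<rho>2 g a2 (\<lambda>u. x) t) -
        c\<^sup>2 * (Ig \<rho>oo g1 one (\<lambda>u. c * u * t) x - Ig \<rho>oo g1 one (\<lambda>u. - (c * u * t)) x)) {0..1}"
      unfolding comb_def[abs_def]
      by (intro has_integral_diff has_integral_add has_integral_mult_right
            hI \<rho>11I \<rho>22I \<rho>1I \<rho>2I \<rho>ooI g1c gc ca cb)
    define Fn where "Fn u = - (c / t) * ((1 - u\<^sup>2) powr \<alpha> * (g (x + c * u * t) + g (x - c * u * t)))" for u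
    have I2: "(comb has_integral (Fn 1 - Fn 0)) {0..1}"
    proof (rule fundamental_theorem_of_calculus_interior)
      show "continuous_on {0..1} Fn" unfolding Fn_def
        using alpha_pos by (intro continuous_intros continuous_on_powr' continuous_on_compose2[OF gc])
           (auto simp: abs_square_le_1)
      fix u :: real assume u: "u \<in> {0<..<1}"
      have pos: "1 - u\<^sup>2 > 0" using u by (simp add: abs_square_less_1)
      have dphi: "((\<lambda>u. (1 - u\<^sup>2) powr \<alpha>) has_real_derivative \<alpha> * \<rho> u * (- (2 * u))) (at u)"
        unfolding \<rho>_def
        by (rule DERIV_chain2[where g="\<lambda>u. 1 - u\<^sup>2" and x=u, OF has_real_derivative_powr[OF pos]]) (auto intro!: derivative_eq_intros)
      have dgp: "((\<lambda>u. g (x + c * u * t)) has_real_derivative g1 (x + c * u * t) * (c * t)) (at u)"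
        by (rule DERIV_chain2[OF g1]) (auto intro!: derivative_eq_intros)
      have dgm: "((\<lambda>u. g (x - c * u * t)) has_real_derivative g1 (x - c * u * t) * (- (c * t))) (at u)"
        by (rule DERIV_chain2[OF g1]) (auto intro!: derivative_eq_intros)
      have dF: "(Fn has_real_derivative - (c / t) * ((\<alpha> * \<rho> u * (- (2 * u))) * (g (x + c * u * t) + g (x - c * u * t)) +
           (1 - u\<^sup>2) powr \<alpha> * (g1 (x + c * u * t) * (c * t) + g1 (x - c * u * t) * (- (c * t))))) (at u)"
        unfolding Fn_def[abs_def]
        by (rule DERIV_cmult, rule DERIV_cong[OF DERIV_mult[OF dphi DERIV_add[OF dgp dgm]]]) (simp add: algebra_simps)
      have pw: "(1 - u\<^sup>2) powr \<alpha> = \<rho> u * (1 - u\<^sup>2)"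
        unfolding \<rho>_def using pos by (simp add: powr_diff)
      have args: "a1 u * t + x = x + c * u * t" "a2 u * t + x = x - c * u * t"
        "one u * x + c * u * t = x + c * u * t" "one u * x + - (c * u * t) = x - c * u * t"
        unfolding a1_def a2_def one_def by (auto simp: algebra_simps)
      have alg: "\<And>r P M P1 M1 :: real. (r * c * u * (c * u) * P1 - r * (- (c * u)) * (- (c * u)) * M1) +
           2 * \<alpha> / t * (r * (c * u) * P - r * (- (c * u)) * M) - c\<^sup>2 * (r * 1 * 1 * P1 - r * 1 * 1 * M1) =
           - (c / t) * ((\<alpha> * r * (- (2 * u))) * (P + M) + (r * (1 - u\<^sup>2)) * (P1 * (c * t) + M1 * (- (c * t))))"
        using t by (simp add: field_simps power2_eq_square)
      have "comb u = - (c / t) * ((\<alpha> * \<rho> u * (- (2 * u))) * (g (x + c * u * t) + g (x - c * u * t)) +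
           (1 - u\<^sup>2) powr \<alpha> * (g1 (x + c * u * t) * (c * t) + g1 (x - c * u * t) * (- (c * t))))"
        unfolding comb_def args pw unfolding \<rho>11_def \<rho>22_def \<rho>1_def \<rho>2_def \<rho>oo_def \<rho>o_def
        using alg[of "\<rho> u"] unfolding a1_def a2_def one_def by (simp add: mult.assoc)
      with dF show "(Fn has_vector_derivative comb u) (at u)"
        by (simp add: has_real_derivative_iff_has_vector_derivative)
    qed simp
    have "Fn 1 - Fn 0 = 2 * c * g x / t" unfolding Fn_def using alpha_pos by simp
    with I1 I2 have eq: "(Ig \<rho>11 g1 a1 (\<lambda>u. x) t - Ig \<rho>22 g1 a2 (\<lambda>u. x) t) +
        2 * \<alpha> / t * (Ig \<rho>1 g a1 (\<lambda>u. x) t - Ig \<rho>2 g a2 (\<lambda>u. x) t) -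
        c\<^sup>2 * (Ig \<rho>oo g1 one (\<lambda>u. c * u * t) x - Ig \<rho>oo g1 one (\<lambda>u. - (c * u * t)) x) = 2 * c * g x / t"
      using has_integral_unique by metis
    have gen: "K / (2 * c) * A + 2 * \<alpha> / t * (K / (2 * c) * B) = c\<^sup>2 * (K / (2 * c) * C) + 2 * g x / (t * Beta \<alpha> (1 / 2))"
      if h: "A + 2 * \<alpha> / t * B - c\<^sup>2 * C = 2 * c * g x / t" for A B C
    proof -
      have "K / (2 * c) * A + 2 * \<alpha> / t * (K / (2 * c) * B) - c\<^sup>2 * (K / (2 * c) * C) =
            K / (2 * c) * (A + 2 * \<alpha> / t * B - c\<^sup>2 * C)" by (simp add: algebra_simps)
      also have "\<dots> = K / (2 * c) * (2 * c * g x / t)" using h by simp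
      also have "\<dots> = 2 * g x / (t * Beta \<alpha> (1 / 2))" unfolding K_def using c_pos t Bpos by (simp add: field_simps)
      finally show ?thesis by simp
    qed
    show ?thesis unfolding V1_def V2_def X2_def by (rule gen[OF eq])
  qed
  have diff: "f differentiable at z" if "(f has_real_derivative D) (at z)" for f :: "real \<Rightarrow> real" and z D
    using that by (meson differentiableI has_field_derivative_imp_has_derivative)
  have part1: "\<forall>x t. t > 0 \<longrightarrow>
            (\<lambda>s. v x s) differentiable at t \<and>
            (\<lambda>s. deriv (\<lambda>r. v x r) s) differentiable at t \<and>
            (\<lambda>y. v y t) differentiable at x \<and>
            (\<lambda>y. deriv (\<lambda>z. v z t) y) differentiable at x \<and>
            deriv (\<lambda>s. deriv (\<lambda>r. v x r) s) t + 2 * \<alpha> / t * deriv (\<lambda>s. v x s) t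
              = c\<^sup>2 * deriv (\<lambda>y. deriv (\<lambda>z. v z t) y) x + 2 * g x / (t * Beta \<alpha> (1/2))"
  proof (intro allI impI conjI)
    fix x t :: real assume t: "t > 0"
    show "(\<lambda>s. v x s) differentiable at t" by (rule diff[OF vt1[OF t]])
    show "(\<lambda>s. deriv (\<lambda>r. v x r) s) differentiable at t" by (rule diff[OF vt2[OF t]])
    show "(\<lambda>y. v y t) differentiable at x" by (rule diff[OF vy1[OF t]])
    show "(\<lambda>y. deriv (\<lambda>z. v z t) y) differentiable at x" by (rule diff[OF vy2[OF t]])
    show "deriv (\<lambda>s. deriv (\<lambda>r. v x r) s) t + 2 * \<alpha> / t * deriv (\<lambda>s. v x s) t
              = c\<^sup>2 * deriv (\<lambda>y. deriv (\<lambda>z. v z t) y) x + 2 * g x / (t * Beta \<alpha> (1/2))"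
      using key[OF t] DERIV_imp_deriv[OF vt2[OF t]] DERIV_imp_deriv[OF vy2[OF t]] dv1[OF t] by simp
  qed
  have part2: "\<forall>x. v x 0 = 0"
    unfolding v_def w_def by simp
  have part3: "((\<lambda>t. v x t) has_real_derivative
                 Gamma (\<alpha> + 1/2) / (sqrt pi * Gamma (\<alpha> + 1)) * g x) (at 0 within {0..})" for x
  proof -
    have d0: "((\<lambda>s. v x s) has_real_derivative V1 x 0) (at 0 within {0..})"
      by (rule has_field_derivative_transform_within[OF has_field_derivative_at_within[OF hV1], of 1]) (auto simp: vT')
    have i1: "((\<lambda>u. \<rho>1 u * g (a1 u * 0 + x)) has_integral (c * g x) * (1 / (2 * \<alpha>))) {0..1}"
      using has_integral_mult_right[OF rho_int[OF alpha_pos], of "c * g x"]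
      by (simp add: \<rho>1_def \<rho>_def a1_def algebra_simps)
    have i2: "((\<lambda>u. \<rho>2 u * g (a2 u * 0 + x)) has_integral (- (c * g x)) * (1 / (2 * \<alpha>))) {0..1}"
      using has_integral_mult_right[OF rho_int[OF alpha_pos], of "- (c * g x)"]
      by (simp add: \<rho>2_def \<rho>_def a2_def algebra_simps)
    have "V1 x 0 = K / (2 * c) * ((c * g x) * (1 / (2 * \<alpha>)) - (- (c * g x)) * (1 / (2 * \<alpha>)))"
      unfolding V1_def Ig_def using integral_unique[OF i1] integral_unique[OF i2] by simp
    also have "\<dots> = K / (2 * \<alpha>) * g x" using c_pos alpha_pos by (simp add: field_simps)
    also have "K / (2 * \<alpha>) = Gamma (\<alpha> + 1/2) / (sqrt pi * Gamma (\<alpha> + 1))"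
    proof -
      have "\<alpha> \<notin> \<int>\<^sub>\<le>\<^sub>0" using alpha_pos nonpos_Ints_nonpos by fastforce
      hence "Gamma (\<alpha> + 1) = \<alpha> * Gamma \<alpha>" by (rule Gamma_plus1)
      moreover have "Gamma \<alpha> > 0" "Gamma (\<alpha> + 1/2) > 0" using alpha_pos by auto
      ultimately show ?thesis unfolding K_def Beta_def Gamma_one_half_real
        using alpha_pos by (simp add: field_simps)
    qed
    finally show ?thesis using d0 by simp
  qed
  show ?thesis using part1 part2 part3 by blast
qed

end
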